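(* Let $n\ge 3$, let $F$ be a set of edges of $Q_n$, and let $T$ be a proper subset of the vertex set of $Q_n$ with $|T|\ge 3$ and $|T|_0\ge|T|_1$, such that every edge of $Q_n$ joining a vertex of parity 0 in $T$ to a vertex outside $T$ belongs to $F$. If the subgraph of $Q_n$ induced by $T$ is not connected, then $F$ is not minimal.
   Context: $Q_n$ is the $n$-dimensional hypercube on the binary strings of length $n$, two strings adjacent iff they differ in exactly one bit. The parity of a vertex is the number of ones in its label modulo 2. For a set $T$ of vertices, $|T|_0$ and $|T|_1$ denote the numbers of vertices of parity 0 and parity 1 in $T$. $F$ is a set of "faulty" edges; $Q_n-F$ is the graph with all vertices of $Q_n$ and the edges of $Q_n$ not in $F$. "$F$ is not minimal" means that there is a proper subset $F'\subsetneq F$ such that $Q_n-F'$ has no Hamiltonian cycle. *)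

theory Defs
  imports Main
begin

definition qverts :: "nat \<Rightarrow> bool list set" where
  "qverts n = {xs. length xs = n}"

definition qadj :: "bool list \<Rightarrow> bool list \<Rightarrow> bool" where
  "qadj u v \<longleftrightarrow> length u = length v \<and> card {i. i < length u \<and> u ! i \<noteq> v ! i} = 1"

definition qedges :: "nat \<Rightarrow> bool list set set" where
  "qedges n = {{u, v} | u v. u \<in> qverts n \<and> v \<in> qverts n \<and> qadj u v}"

definition parity :: "bool list \<Rightarrow> nat" where
  "parity xs = length (filter id xs) mod 2"

definition card_par :: "nat \<Rightarrow> bool list set \<Rightarrow> nat" where
  "card_par p T = card {x \<in> T. parity x = p}"

definition ham_cycle :: "'a set \<Rightarrow> 'a set set \<Rightarrow> 'a list \<Rightarrow> bool" where
  "ham_cycle V E cs \<longleftrightarrow> distinct cs \<and> set cs = V \<and> length cs \<ge> 3 \<and>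
     (\<forall>i < length cs. {cs ! i, cs ! ((i + 1) mod length cs)} \<in> E)"

definition has_ham_cycle :: "'a set \<Rightarrow> 'a set set \<Rightarrow> bool" where
  "has_ham_cycle V E \<longleftrightarrow> (\<exists>cs. ham_cycle V E cs)"

definition qham :: "nat \<Rightarrow> bool list set set \<Rightarrow> bool" where
  "qham n F \<longleftrightarrow> has_ham_cycle (qverts n) (qedges n - F)"

definition not_minimal :: "nat \<Rightarrow> bool list set set \<Rightarrow> bool" where
  "not_minimal n F \<longleftrightarrow> (\<exists>F'. F' \<subset> F \<and> \<not> qham n F')"

definition induced_connected :: "nat \<Rightarrow> bool list set \<Rightarrow> bool" where
  "induced_connected n T \<longleftrightarrow>
     (\<forall>u\<in>T. \<forall>v\<in>T. (u, v) \<in> {(x, y). x \<in> T \<and> y \<in> T \<and> {x, y} \<in> qedges n}\<^sup>*)"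

end

theory Submission
  imports Defs
begin


definition diffs :: "bool list \<Rightarrow> bool list \<Rightarrow> nat set" where
  "diffs u v = {i. i < length u \<and> u ! i \<noteq> v ! i}"

lemma diffs_Cons: "diffs (a#u) (b#v) = (if a \<noteq> b then {0} else {}) \<union> Suc ` diffs u v"
proof (rule set_eqI)
  fix i show "i \<in> diffs (a#u) (b#v) \<longleftrightarrow> i \<in> (if a \<noteq> b then {0} else {}) \<union> Suc ` diffs u v"
    by (cases i) (simp_all add: diffs_def inj_image_mem_iff)
qed

lemma finite_diffs: "finite (diffs u v)"
  unfolding diffs_def by auto

lemma card_diffs_Cons: "card (diffs (a#u) (b#v)) = (if a \<noteq> b then 1 else 0) + card (diffs u v)"
proof -
  have c: "card (Suc ` diffs u v) = card (diffs u v)" by (simp add: card_image)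
  have "0 \<notin> Suc ` diffs u v" by auto
  then have "card (insert 0 (Suc ` diffs u v)) = Suc (card (Suc ` diffs u v))"
    using finite_diffs[of u v] by simp
  then show ?thesis unfolding diffs_Cons using c by simp
qed

lemma diffs_empty: "length u = length v \<Longrightarrow> diffs u v = {} \<longleftrightarrow> u = v"
  unfolding diffs_def by (auto simp: list_eq_iff_nth_eq)

lemma qadj_diffs: "qadj u v \<longleftrightarrow> length u = length v \<and> card (diffs u v) = 1"
  unfolding qadj_def diffs_def by simp

lemma diffs_sym: "length u = length v \<Longrightarrow> diffs u v = diffs v u"
  unfolding diffs_def by auto

lemma qadj_sym: "qadj u v \<longleftrightarrow> qadj v u"
  unfolding qadj_diffs using diffs_sym[of u v] by metis

lemma qadj_Cons: "qadj (a#u) (b#v) \<longleftrightarrow> length u = length v \<and> (if a = b then qadj u v else u = v)"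
proof (cases "length u = length v")
  case False then show ?thesis by (simp add: qadj_diffs)
next
  case True
  have z: "card (diffs u v) = 0 \<longleftrightarrow> u = v"
    using diffs_empty[OF True] finite_diffs[of u v] by simp
  show ?thesis
  proof (cases "a = b")
    case True
    then show ?thesis using \<open>length u = length v\<close> by (simp add: qadj_diffs card_diffs_Cons)
  next
    case False
    then show ?thesis using \<open>length u = length v\<close> z by (simp add: qadj_diffs card_diffs_Cons)
  qed
qed

lemma par_even: "length u = length v \<Longrightarrow>
   even (length (filter id u) + length (filter id v) + card (diffs u v))"
proof (induction u v rule: list_induct2)
  case Nil then show ?case by (simp add: diffs_def)
next
  case (Cons x xs y ys)
  then show ?case by (cases x; cases y; simp add: card_diffs_Cons; presburger)
qed

lemma qadj_parity: "qadj u v \<Longrightarrow> parity u \<noteq> parity v"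
proof -
  assume "qadj u v"
  then have "length u = length v" "card (diffs u v) = 1" unfolding qadj_diffs by auto
  then have "even (length (filter id u) + length (filter id v) + 1)" using par_even[of u v] by simp
  moreover have "\<And>a b::nat. even (a + b + 1) \<Longrightarrow> a mod 2 \<noteq> b mod 2" by presburger
  ultimately show ?thesis unfolding parity_def by blast
qed

lemma parity_lt: "parity u < 2" unfolding parity_def by simp

lemma qedges_iff: "{u, v} \<in> qedges n \<longleftrightarrow> u \<in> qverts n \<and> v \<in> qverts n \<and> qadj u v"
  unfolding qedges_def by (auto simp: doubleton_eq_iff qadj_sym)

lemma finite_qverts: "finite (qverts n)"
proof -
  have "qverts n = {xs. set xs \<subseteq> (UNIV::bool set) \<and> length xs = n}" unfolding qverts_def by auto
  then show ?thesis using finite_lists_length_eq[of "UNIV::bool set" n] by simp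
qed

fun gray :: "nat \<Rightarrow> bool list list" where
  "gray 0 = [[]]"
| "gray (Suc n) = map (Cons False) (gray n) @ map (Cons True) (rev (gray n))"

lemma gray_ne: "gray n \<noteq> []" by (induction n) auto

lemma gray_len: "length (gray n) = 2 ^ n" by (induction n) auto

lemma gray_set: "set (gray n) = qverts n"
proof (induction n)
  case 0 then show ?case by (auto simp: qverts_def)
next
  case (Suc n)
  show ?case
  proof
    show "set (gray (Suc n)) \<subseteq> qverts (Suc n)" using Suc by (auto simp: qverts_def)
    show "qverts (Suc n) \<subseteq> set (gray (Suc n))"
    proof
      fix x assume "x \<in> qverts (Suc n)"
      then obtain b y where "x = b # y" "y \<in> qverts n" by (cases x) (auto simp: qverts_def)
      then show "x \<in> set (gray (Suc n))" using Suc by (cases b) auto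
    qed
  qed
qed

lemma gray_distinct: "distinct (gray n)"
  by (induction n) (auto simp: distinct_map)

lemma gray_hd: "hd (gray (Suc n)) = False # hd (gray n)"
  using gray_ne[of n] by (simp add: hd_map)

lemma gray_last: "last (gray (Suc n)) = True # hd (gray n)"
  using gray_ne[of n] by (simp add: last_map last_rev)

lemma gray_len_elem: "x \<in> set (gray n) \<Longrightarrow> length x = n"
  using gray_set[of n] by (auto simp: qverts_def)

lemma gray_succ: "successively qadj (gray n)"
proof (induction n)
  case 0 then show ?case by simp
next
  case (Suc n)
  have "successively qadj (map (Cons False) (gray n))"
    unfolding successively_map using Suc
    by (rule successively_mono) (auto simp: qadj_Cons gray_len_elem)
  moreover have "successively qadj (map (Cons True) (rev (gray n)))"
    unfolding successively_map successively_rev using Suc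
    by (rule successively_mono) (auto simp: qadj_Cons qadj_sym gray_len_elem)
  moreover have "qadj (last (map (Cons False) (gray n))) (hd (map (Cons True) (rev (gray n))))"
    using gray_ne[of n] by (simp add: last_map hd_map hd_rev qadj_Cons)
  ultimately show ?case by (simp add: successively_append_iff)
qed

lemma successively_nth: "successively P xs \<Longrightarrow> Suc i < length xs \<Longrightarrow> P (xs ! i) (xs ! Suc i)"
proof (induction P xs arbitrary: i rule: successively.induct)
  case (3 P x y xs)
  then show ?case by (cases i) auto
qed auto

lemma gray_ham: assumes "n \<ge> 2" shows "ham_cycle (qverts n) (qedges n) (gray n)"
  unfolding ham_cycle_def
proof (intro conjI allI impI)
  show "distinct (gray n)" by (rule gray_distinct)
  show "set (gray n) = qverts n" by (rule gray_set)
  have "(2::nat) ^ 2 \<le> 2 ^ n" using assms by (intro power_increasing) auto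
  then have "(4::nat) \<le> 2 ^ n" by simp
  then show "length (gray n) \<ge> 3" by (simp add: gray_len)
  fix i assume i: "i < length (gray n)"
  let ?L = "length (gray n)"
  show "{gray n ! i, gray n ! ((i + 1) mod ?L)} \<in> qedges n"
  proof (cases "Suc i < ?L")
    case True
    have "qadj (gray n ! i) (gray n ! Suc i)" by (rule successively_nth[OF gray_succ True])
    moreover have "gray n ! i \<in> qverts n" "gray n ! Suc i \<in> qverts n"
      using True i gray_set[of n] nth_mem by (metis Suc_lessD)+
    ultimately show ?thesis using True by (simp add: qedges_iff)
  next
    case False
    then have si: "Suc i = ?L" using i by simp
    then have ii: "i = ?L - 1" "(i+1) mod ?L = 0" by (simp, metis Suc_eq_plus1 mod_self)
    obtain m where m: "n = Suc m" using assms by (cases n) auto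
    have "qadj (last (gray n)) (hd (gray n))" unfolding m gray_hd gray_last
      using gray_ne[of m] by (simp add: qadj_Cons)
    moreover have "gray n ! i = last (gray n)" using ii gray_ne[of n] by (simp add: last_conv_nth)
    moreover have "gray n ! 0 = hd (gray n)" using gray_ne[of n] by (simp add: hd_conv_nth)
    ultimately have "qadj (gray n ! i) (gray n ! ((i+1) mod ?L))" using ii by simp
    moreover have "gray n ! i \<in> qverts n" "gray n ! ((i+1) mod ?L) \<in> qverts n"
      using i ii gray_set[of n] nth_mem gray_ne[of n] by (metis length_greater_0_conv)+
    ultimately show ?thesis by (simp add: qedges_iff)
  qed
qed



definition sc :: "nat \<Rightarrow> nat \<Rightarrow> nat" where "sc L i = (if Suc i < L then Suc i else 0)"
definition pr :: "nat \<Rightarrow> nat \<Rightarrow> nat" where "pr L i = (if i = 0 then L - 1 else i - 1)"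

lemma mod_sc: assumes "i < L" shows "(i + 1) mod L = sc L i"
proof (cases "Suc i < L")
  case True then show ?thesis by (simp add: sc_def)
next
  case False then have "Suc i = L" using assms by simp
  then show ?thesis by (simp add: sc_def)
qed

lemma sc_lt: "0 < L \<Longrightarrow> sc L i < L" unfolding sc_def by auto
lemma pr_lt: "i < L \<Longrightarrow> pr L i < L" unfolding pr_def by auto
lemma sc_pr: "i < L \<Longrightarrow> sc L (pr L i) = i" unfolding sc_def pr_def by auto
lemma pr_sc: "i < L \<Longrightarrow> pr L (sc L i) = i" unfolding sc_def pr_def by auto
lemma inj_sc: "inj_on (sc L) {..<L}"
  by (rule inj_onI) (metis lessThan_iff pr_sc)
lemma inj_pr: "inj_on (pr L) {..<L}"
  by (rule inj_onI) (metis lessThan_iff sc_pr)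
lemma pr_ne_sc: "3 \<le> L \<Longrightarrow> i < L \<Longrightarrow> pr L i \<noteq> sc L i"
  unfolding sc_def pr_def by auto

lemma card_pos: "distinct cs \<Longrightarrow> A \<subseteq> set cs \<Longrightarrow> card {i. i < length cs \<and> cs ! i \<in> A} = card A"
proof -
  assume d: "distinct cs" and A: "A \<subseteq> set cs"
  let ?P = "{i. i < length cs \<and> cs ! i \<in> A}"
  have "nth cs ` ?P = A"
  proof
    show "nth cs ` ?P \<subseteq> A" by auto
    show "A \<subseteq> nth cs ` ?P"
    proof
      fix x assume x: "x \<in> A"
      then obtain i where "i < length cs" "cs ! i = x" using A by (metis in_set_conv_nth subsetD)
      then show "x \<in> nth cs ` ?P" using x by force
    qed
  qed
  moreover have "inj_on (nth cs) ?P" using d by (intro inj_on_nth) auto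
  ultimately show ?thesis using card_image by fastforce
qed

lemma count_le:
  assumes d: "distinct cs" and A: "A \<subseteq> set cs" and B: "B \<subseteq> set cs"
    and g: "inj_on g {..<length cs}"
    and m: "\<forall>i<length cs. cs ! i \<in> A \<longrightarrow> g i < length cs \<and> cs ! (g i) \<in> B"
  shows "card A \<le> card B"
proof -
  let ?P0 = "{i. i < length cs \<and> cs ! i \<in> A}"
  let ?P1 = "{i. i < length cs \<and> cs ! i \<in> B}"
  have "g ` ?P0 \<subseteq> ?P1" using m by auto
  moreover have "inj_on g ?P0" using g by (rule inj_on_subset) auto
  ultimately have "card ?P0 \<le> card ?P1" by (metis (no_types, lifting) card_inj_on_le finite_nat_set_iff_bounded mem_Collect_eq)
  then show ?thesis using card_pos[OF d A] card_pos[OF d B] by simp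
qed

lemma ham_sc: "ham_cycle V E cs \<Longrightarrow> i < length cs \<Longrightarrow> {cs ! i, cs ! sc (length cs) i} \<in> E"
  unfolding ham_cycle_def using mod_sc by (metis Suc_eq_plus1)

lemma ham_pr: "ham_cycle V E cs \<Longrightarrow> i < length cs \<Longrightarrow> {cs ! i, cs ! pr (length cs) i} \<in> E"
  using ham_sc[of V E cs "pr (length cs) i"] pr_lt[of i "length cs"] sc_pr[of i "length cs"]
  by (simp add: insert_commute)

lemma nonham1:
  assumes h: "ham_cycle V E cs" and A: "A \<subseteq> V" and B: "B \<subseteq> V" and ne: "A \<noteq> {}"
    and adj: "\<forall>x\<in>A. \<forall>y. {x, y} \<in> E \<longrightarrow> y \<in> B" and c: "card B \<le> card A"
  shows "A \<union> B = V"
proof -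
  define L where "L = length cs"
  have d: "distinct cs" and V: "set cs = V" and L3: "3 \<le> L" using h unfolding ham_cycle_def L_def by auto
  define P0 where "P0 = {i. i < L \<and> cs ! i \<in> A}"
  define P1 where "P1 = {i. i < L \<and> cs ! i \<in> B}"
  have fin: "finite P1" unfolding P1_def by auto
  have L0: "0 < L" using L3 by simp
  have scl: "\<And>i. sc L i < L" using sc_lt[OF L0] .
  have cP0: "card P0 = card A" unfolding P0_def L_def using card_pos d A V by blast
  have cP1: "card P1 = card B" unfolding P1_def L_def using card_pos d B V by blast
  have sub: "sc L ` P0 \<subseteq> P1" using adj ham_sc[OF h] scl unfolding P0_def P1_def L_def by auto
  have "inj_on (sc L) P0" using inj_sc by (rule inj_on_subset) (auto simp: P0_def)
  then have "card (sc L ` P0) = card P0" by (rule card_image)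
  then have eq: "sc L ` P0 = P1" using card_seteq[OF fin sub] c cP0 cP1 by simp
  let ?P = "P0 \<union> P1"
  have clos: "pr L j \<in> ?P" if "j \<in> ?P" for j
  proof (cases "j \<in> P0")
    case True
    then show ?thesis using adj ham_pr[OF h] pr_lt unfolding P0_def P1_def L_def by auto
  next
    case False
    then have "j \<in> P1" using that by auto
    then obtain i where "i \<in> P0" "j = sc L i" using eq by auto
    then show ?thesis using pr_sc[of i L] by (auto simp: P0_def)
  qed
  have nclos: "sc L j \<notin> ?P" if "j < L" "j \<notin> ?P" for j
    using clos[of "sc L j"] pr_sc[OF that(1)] that(2) by auto
  have all: "\<forall>k<L. k \<in> ?P"
  proof (rule ccontr)
    assume "\<not> (\<forall>k<L. k \<in> ?P)"
    then obtain j0 where j0: "j0 < L" "j0 \<notin> ?P" by auto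
    have step1: "j0 + m < L \<Longrightarrow> j0 + m \<notin> ?P" for m
    proof (induction m)
      case 0 then show ?case using j0 by simp
    next
      case (Suc m)
      then have "sc L (j0 + m) = j0 + Suc m" unfolding sc_def by auto
      then show ?case using nclos[of "j0 + m"] Suc by auto
    qed
    have "L - 1 \<notin> ?P" using step1[of "L - 1 - j0"] j0 by auto
    then have z: "0 \<notin> ?P" using nclos[of "L - 1"] L3 unfolding sc_def by auto
    have "k < L \<Longrightarrow> k \<notin> ?P" for k
    proof (induction k)
      case 0 then show ?case using z by simp
    next
      case (Suc k)
      then have "sc L k = Suc k" unfolding sc_def by auto
      then show ?case using nclos[of k] Suc by auto
    qed
    moreover obtain x where "x \<in> A" using ne by auto
    then obtain k where "k < L" "cs ! k = x" using A V by (metis L_def in_set_conv_nth subsetD)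
    ultimately show False using \<open>x \<in> A\<close> unfolding P0_def by auto
  qed
  have "V \<subseteq> A \<union> B"
  proof
    fix x assume "x \<in> V"
    then obtain k where "k < L" "cs ! k = x" using V by (metis L_def in_set_conv_nth)
    then show "x \<in> A \<union> B" using all unfolding P0_def P1_def by auto
  qed
  then show ?thesis using A B by auto
qed

lemma nonham2:
  assumes h: "ham_cycle V E cs" and A: "A \<subseteq> V" and B: "B \<subseteq> V"
    and adj: "\<forall>x\<in>A. \<forall>y. {x, y} \<in> E \<longrightarrow> {x, y} \<noteq> e \<longrightarrow> y \<in> B"
    and eA: "\<forall>x\<in>A. \<forall>y\<in>A. e \<noteq> {x, y}" and c: "card B < card A"
  shows False
proof -
  define L where "L = length cs"
  have d: "distinct cs" and V: "set cs = V" and L3: "3 \<le> L" using h unfolding ham_cycle_def L_def by auto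
  have L0: "0 < L" using L3 by simp
  have scl: "\<And>i. sc L i < L" using sc_lt[OF L0] .
  show False
  proof (cases "\<forall>i<L. cs ! i \<in> A \<longrightarrow> cs ! (sc L i) \<in> B")
    case True
    have "card A \<le> card B" 
      by (rule count_le[OF d, of A B "sc L"]) (use A B V True scl inj_sc[of L] in \<open>auto simp: L_def\<close>)
    then show False using c by simp
  next
    case False
    then obtain i0 where i0: "i0 < L" "cs ! i0 \<in> A" "cs ! (sc L i0) \<notin> B" by auto
    then have e0: "e = {cs ! i0, cs ! (sc L i0)}" using adj ham_sc[OF h] unfolding L_def by auto
    have sA: "cs ! (sc L i0) \<notin> A" using eA e0 i0 by auto
    have "\<forall>i<L. cs ! i \<in> A \<longrightarrow> cs ! (pr L i) \<in> B"
    proof (intro allI impI, rule ccontr)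
      fix i assume i: "i < L" "cs ! i \<in> A" "cs ! (pr L i) \<notin> B"
      then have e1: "e = {cs ! i, cs ! (pr L i)}" using adj ham_pr[OF h] unfolding L_def by auto
      have pA: "cs ! (pr L i) \<notin> A" using eA e1 i by auto
      have "cs ! i = cs ! i0 \<and> cs ! (pr L i) = cs ! (sc L i0)"
        using e0 e1 sA pA i i0 by (auto simp: doubleton_eq_iff)
      then have "i = i0" "pr L i = sc L i0"
        using d i i0 pr_lt[of i L] scl[of i0] L3 unfolding L_def
        by (auto simp: nth_eq_iff_index_eq)
      then show False using pr_ne_sc[OF L3 i0(1)] by simp
    qed
    then have "card A \<le> card B"
      by (intro count_le[OF d, of A B "pr L"]) (use A B V pr_lt inj_pr[of L] in \<open>auto simp: L_def\<close>)
    then show False using c by simp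
  qed
qed



lemma card_par_Un: "finite S \<Longrightarrow> finite W \<Longrightarrow> S \<inter> W = {} \<Longrightarrow>
   card_par p (S \<union> W) = card_par p S + card_par p W"
proof -
  assume f: "finite S" "finite W" and d: "S \<inter> W = {}"
  have "{x \<in> S \<union> W. parity x = p} = {x \<in> S. parity x = p} \<union> {x \<in> W. parity x = p}" by auto
  moreover have "card ({x \<in> S. parity x = p} \<union> {x \<in> W. parity x = p}) =
      card {x \<in> S. parity x = p} + card {x \<in> W. parity x = p}"
    using f d by (intro card_Un_disjoint) auto
  ultimately show ?thesis unfolding card_par_def by simp
qed

lemma par01: "parity x \<noteq> 0 \<Longrightarrow> parity x = 1" using parity_lt[of x] by simp

lemma main:
  assumes n2: "n \<ge> 2" and T: "T \<subset> qverts n"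
    and hyp6: "\<forall>u\<in>T. \<forall>v\<in>qverts n - T. parity u = 0 \<longrightarrow> {u, v} \<in> qedges n \<longrightarrow> {u, v} \<in> F"
    and ST: "S \<union> W = T" "S \<inter> W = {}" "S \<noteq> {}" "W \<noteq> {}"
    and sep: "\<forall>x\<in>S. \<forall>y\<in>W. {x, y} \<notin> qedges n"
    and cS: "card_par 1 S \<le> card_par 0 S"
    and cT: "card_par 1 T \<le> card_par 0 T"
  shows "not_minimal n F"
proof -
  define V where "V = qverts n"
  have fV: "finite V" unfolding V_def by (rule finite_qverts)
  have TV: "T \<subseteq> V" "T \<noteq> V" using T unfolding V_def by auto
  have fT: "finite T" using fV TV finite_subset by blast
  have fS: "finite S" and fW: "finite W" using fT ST finite_subset by blast+
  define A where "A = {x \<in> S. parity x = 0}"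
  define B where "B = {x \<in> S. parity x = 1}"
  define A' where "A' = {x \<in> W. parity x = 0}"
  define B' where "B' = {x \<in> W. parity x = 1}"
  have cAB: "card B \<le> card A" using cS unfolding A_def B_def card_par_def .
  have SAB: "S = A \<union> B" unfolding A_def B_def using par01 by auto
  have WAB: "W = A' \<union> B'" unfolding A'_def B'_def using par01 by auto
  have ABV: "A \<union> B \<noteq> V" using SAB ST TV by auto
  have ABV': "A' \<union> B' \<noteq> V" using WAB ST TV by auto
  have AV: "A \<subseteq> V" "B \<subseteq> V" "A' \<subseteq> V" "B' \<subseteq> V" using ST TV unfolding A_def B_def A'_def B'_def by auto
  have Ane: "A \<noteq> {}"
  proof
    assume "A = {}"
    then have "card B = 0" using cAB by simp
    moreover have "finite B" using fS unfolding B_def by auto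
    ultimately have "B = {}" by simp
    then show False using \<open>A = {}\<close> SAB ST by simp
  qed
  define F1 where "F1 = {e. \<exists>u v. e = {u, v} \<and> u \<in> A \<and> v \<in> V \<and> v \<notin> S \<and> qadj u v}"
  have F1F: "F1 \<subseteq> F"
  proof
    fix e assume "e \<in> F1"
    then obtain u v where e: "e = {u, v}" "u \<in> A" "v \<in> V" "v \<notin> S" "qadj u v" unfolding F1_def by auto
    have uT: "u \<in> T" "u \<in> S" using e ST unfolding A_def by auto
    have E: "{u, v} \<in> qedges n" using e uT TV by (auto simp: qedges_iff V_def)
    have "v \<notin> W" using sep uT E by blast
    then have "v \<in> qverts n - T" using e ST V_def by auto
    then show "e \<in> F" using hyp6 uT E e unfolding A_def by auto
  qed
  have key: "y \<in> B" if "x \<in> A" "{x, y} \<in> qedges n" "{x, y} \<notin> F1" for x y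
  proof -
    have q: "y \<in> V" "qadj x y" "x \<in> V" using that unfolding qedges_iff V_def by auto
    have "y \<in> S" using that q unfolding F1_def by blast
    moreover have "parity y = 1" using qadj_parity[OF q(2)] that(1) par01 unfolding A_def by auto
    ultimately show ?thesis unfolding B_def by auto
  qed
  show ?thesis
  proof (cases "F = {}")
    case True
    have h: "ham_cycle V (qedges n) (gray n)" using gray_ham[OF n2] unfolding V_def .
    have "A \<union> B = V"
      by (rule nonham1[OF h AV(1) AV(2) Ane _ cAB]) (use key F1F True in blast)
    then show ?thesis using ABV by simp
  next
    case Fne: False
    show ?thesis
    proof (cases "F1 = F")
      case False
      have "\<not> qham n F1"
      proof
        assume "qham n F1"
        then obtain cs where h: "ham_cycle V (qedges n - F1) cs"
          unfolding qham_def has_ham_cycle_def V_def by auto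
        have "A \<union> B = V"
          by (rule nonham1[OF h AV(1) AV(2) Ane _ cAB]) (use key in blast)
        then show False using ABV by simp
      qed
      then show ?thesis unfolding not_minimal_def using F1F False by blast
    next
      case F1eq: True
      show ?thesis
      proof (cases "card B < card A")
        case True
        obtain e where e: "e \<in> F" using Fne by auto
        have "\<not> qham n (F - {e})"
        proof
          assume "qham n (F - {e})"
          then obtain cs where h: "ham_cycle V (qedges n - (F - {e})) cs"
            unfolding qham_def has_ham_cycle_def V_def by auto
          have eA: "\<forall>x\<in>A. \<forall>y\<in>A. e \<noteq> {x, y}"
          proof (intro ballI)
            fix x y assume xy: "x \<in> A" "y \<in> A"
            obtain u v where uv: "e = {u, v}" "v \<notin> S" using e F1eq unfolding F1_def by auto
            show "e \<noteq> {x, y}" using xy uv unfolding A_def by (auto simp: doubleton_eq_iff)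
          qed
          show False
            by (rule nonham2[OF h AV(1) AV(2) _ eA True]) (use key F1eq in blast)
        qed
        moreover have "F - {e} \<subset> F" using e by auto
        ultimately show ?thesis unfolding not_minimal_def by blast
      next
        case False
        then have cAB': "card B' \<le> card A'"
          using cT cAB card_par_Un[OF fS fW ST(2)] ST(1) unfolding A_def B_def A'_def B'_def card_par_def
          by simp
        have Ane': "A' \<noteq> {}"
        proof
          assume "A' = {}"
          then have "card B' = 0" using cAB' by simp
          moreover have "finite B'" using fW unfolding B'_def by auto
          ultimately have "B' = {}" by simp
          then show False using \<open>A' = {}\<close> WAB ST by simp
        qed
        have key': "y \<in> B'" if "x \<in> A'" "{x, y} \<in> qedges n" for x y
        proof -
          have q: "y \<in> V" "qadj x y" "x \<in> V" using that unfolding qedges_iff V_def by auto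
          have xW: "x \<in> W" "x \<in> T" "parity x = 0" using that ST unfolding A'_def by auto
          have yS: "y \<notin> S"
          proof
            assume "y \<in> S"
            then have "{y, x} \<notin> qedges n" using sep xW by blast
            then show False using that(2) by (simp add: insert_commute)
          qed
          have "y \<in> T"
          proof (rule ccontr)
            assume "y \<notin> T"
            then have "{x, y} \<in> F" using hyp6 xW q that(2) unfolding V_def by blast
            then have "{x, y} \<in> F1" using F1eq by simp
            then obtain u v where uv: "{x, y} = {u, v}" "u \<in> A" "v \<notin> S" unfolding F1_def by auto
            then show False using xW yS ST(2) unfolding A_def by (auto simp: doubleton_eq_iff)
          qed
          then have "y \<in> W" using yS ST by auto
          moreover have "parity y = 1" using qadj_parity[OF q(2)] xW par01 by auto
          ultimately show ?thesis unfolding B'_def by auto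
        qed
        have "\<not> qham n {}"
        proof
          assume "qham n {}"
          then obtain cs where h: "ham_cycle V (qedges n - {}) cs"
            unfolding qham_def has_ham_cycle_def V_def by auto
          have "A' \<union> B' = V"
            by (rule nonham1[OF h AV(3) AV(4) Ane' _ cAB']) (use key' in blast)
          then show False using ABV' by simp
        qed
        then show ?thesis unfolding not_minimal_def using Fne by blast
      qed
    qed
  qed
qed

theorem lemma4:
  fixes n :: nat and F :: "bool list set set" and T :: "bool list set"
  assumes "n \<ge> 3"
    and "F \<subseteq> qedges n"
    and "T \<subset> qverts n"
    and "card T \<ge> 3"
    and "card_par 0 T \<ge> card_par 1 T"
    and "\<forall>u\<in>T. \<forall>v\<in>qverts n - T. parity u = 0 \<longrightarrow> {u, v} \<in> qedges n \<longrightarrow> {u, v} \<in> F"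
    and "\<not> induced_connected n T"
  shows "not_minimal n F"
proof -
  define R where "R = {(x, y). x \<in> T \<and> y \<in> T \<and> {x, y} \<in> qedges n}"
  obtain a b where ab: "a \<in> T" "b \<in> T" "(a, b) \<notin> R\<^sup>*"
    using assms(7) unfolding induced_connected_def R_def by blast
  define X where "X = {y \<in> T. (a, y) \<in> R\<^sup>*}"
  define Y where "Y = T - X"
  have XY: "X \<union> Y = T" "X \<inter> Y = {}" "X \<noteq> {}" "Y \<noteq> {}"
    using ab unfolding X_def Y_def by auto
  have sepXY: "\<forall>x\<in>X. \<forall>y\<in>Y. {x, y} \<notin> qedges n"
  proof (intro ballI notI)
    fix x y assume xy: "x \<in> X" "y \<in> Y" "{x, y} \<in> qedges n"
    then have "(x, y) \<in> R" unfolding R_def X_def Y_def by auto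
    moreover have "(a, x) \<in> R\<^sup>*" using xy unfolding X_def by auto
    ultimately have "(a, y) \<in> R\<^sup>*" by (meson rtrancl_into_rtrancl)
    then show False using xy unfolding X_def Y_def by auto
  qed
  have sepYX: "\<forall>x\<in>Y. \<forall>y\<in>X. {x, y} \<notin> qedges n"
    using sepXY by (metis insert_commute)
  have fT: "finite T" using assms(3) finite_qverts finite_subset by blast
  have fX: "finite X" "finite Y" using fT XY finite_subset by blast+
  have n2: "n \<ge> 2" using assms(1) by simp
  have sum: "card_par p T = card_par p X + card_par p Y" for p
    using card_par_Un[OF fX XY(2)] XY(1) by simp
  show ?thesis
  proof (cases "card_par 1 X \<le> card_par 0 X")
    case True
    show ?thesis by (rule main[OF n2 assms(3) assms(6) XY sepXY True assms(5)])
  next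
    case False
    then have c: "card_par 1 Y \<le> card_par 0 Y" using sum[of 0] sum[of 1] assms(5) by simp
    have YX: "Y \<union> X = T" "Y \<inter> X = {}" "Y \<noteq> {}" "X \<noteq> {}" using XY by auto
    show ?thesis by (rule main[OF n2 assms(3) assms(6) YX sepYX c assms(5)])
  qed
qed

end
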